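(* Let $f\colon M\to G$ be an epimorphism in the category $\mathbf{TGr}$ of Hausdorff topological groups and continuous homomorphisms, and let $H$ be the closure of the subgroup $f(M)$ in $G$. If any one of the following conditions holds, then $f(M)$ is dense in $G$: (1) the right uniformity $\mathcal U_r$ on the coset space $G/H$ is non-archimedean; (2) $G$ is a non-archimedean topological group; (3) $H$ is open in $G$.
   Context: A morphism $f\colon M\to G$ in $\mathbf{TGr}$ is an epimorphism if there is no pair of distinct continuous homomorphisms $g,h\colon G\to P$ into a Hausdorff topological group $P$ with $g\circ f=h\circ f$. A topological group is non-archimedean if it has a local base at the identity consisting of open subgroups. For a closed subgroup $H$ of $G$, the right uniformity $\mathcal U_r$ on the left coset space $G/H$ is the uniformity with base the entourages $\tilde U=\{(aH,bH): bH\subseteq UaH\}$, $U$ ranging over the neighborhoods of the identity in $G$. A uniformity is non-archimedean if it has a base consisting of equivalence relations. *)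

theory Defs
  imports "HOL-Analysis.Product_Topology" "HOL-Analysis.T1_Spaces" "HOL-Algebra.Coset"
begin

definition topological_group :: "'a monoid \<Rightarrow> 'a topology \<Rightarrow> bool" where
  "topological_group G T \<longleftrightarrow> group G \<and> topspace T = carrier G \<and>
     continuous_map (prod_topology T T) T (\<lambda>(x, y). x \<otimes>\<^bsub>G\<^esub> y) \<and>
     continuous_map T T (\<lambda>x. inv\<^bsub>G\<^esub> x)"

definition haus_topgroup :: "'a monoid \<Rightarrow> 'a topology \<Rightarrow> bool" where
  "haus_topgroup G T \<longleftrightarrow> topological_group G T \<and> Hausdorff_space T"

definition cont_hom :: "'a monoid \<Rightarrow> 'a topology \<Rightarrow> 'b monoid \<Rightarrow> 'b topology \<Rightarrow> ('a \<Rightarrow> 'b) \<Rightarrow> bool" where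
  "cont_hom G TG P TP g \<longleftrightarrow> g \<in> hom G P \<and> continuous_map TG TP g"

definition tgr_epi :: "'m monoid \<Rightarrow> 'm topology \<Rightarrow> 'g monoid \<Rightarrow> 'g topology \<Rightarrow> ('m \<Rightarrow> 'g) \<Rightarrow> bool" where
  "tgr_epi M TM G TG f \<longleftrightarrow> haus_topgroup M TM \<and> haus_topgroup G TG \<and> cont_hom M TM G TG f \<and>
     (\<forall>(P :: 'g list monoid) TP g h.
        haus_topgroup P TP \<and> cont_hom G TG P TP g \<and> cont_hom G TG P TP h \<and>
        (\<forall>x\<in>carrier M. g (f x) = h (f x)) \<longrightarrow> (\<forall>y\<in>carrier G. g y = h y))"

definition nhd_one :: "'a monoid \<Rightarrow> 'a topology \<Rightarrow> 'a set \<Rightarrow> bool" where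
  "nhd_one G T U \<longleftrightarrow> U \<subseteq> topspace T \<and> (\<exists>W. openin T W \<and> \<one>\<^bsub>G\<^esub> \<in> W \<and> W \<subseteq> U)"

definition non_archimedean_group :: "'a monoid \<Rightarrow> 'a topology \<Rightarrow> bool" where
  "non_archimedean_group G T \<longleftrightarrow>
     (\<forall>U. openin T U \<and> \<one>\<^bsub>G\<^esub> \<in> U \<longrightarrow>
        (\<exists>V. subgroup V G \<and> openin T V \<and> V \<subseteq> U))"

definition lcosets :: "'a monoid \<Rightarrow> 'a set \<Rightarrow> 'a set set" where
  "lcosets G H = {a <#\<^bsub>G\<^esub> H | a. a \<in> carrier G}"

definition right_entourage :: "'a monoid \<Rightarrow> 'a set \<Rightarrow> 'a set \<Rightarrow> ('a set \<times> 'a set) set" where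
  "right_entourage G H U = {(a <#\<^bsub>G\<^esub> H, b <#\<^bsub>G\<^esub> H) | a b.
      a \<in> carrier G \<and> b \<in> carrier G \<and> b <#\<^bsub>G\<^esub> H \<subseteq> U <#>\<^bsub>G\<^esub> (a <#\<^bsub>G\<^esub> H)}"

definition right_unif_entourage :: "'a monoid \<Rightarrow> 'a topology \<Rightarrow> 'a set \<Rightarrow> ('a set \<times> 'a set) set \<Rightarrow> bool" where
  "right_unif_entourage G T H E \<longleftrightarrow> E \<subseteq> lcosets G H \<times> lcosets G H \<and>
     (\<exists>U. nhd_one G T U \<and> right_entourage G H U \<subseteq> E)"

definition right_unif_non_archimedean :: "'a monoid \<Rightarrow> 'a topology \<Rightarrow> 'a set \<Rightarrow> bool" where
  "right_unif_non_archimedean G T H \<longleftrightarrow>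
     (\<forall>E. right_unif_entourage G T H E \<longrightarrow>
        (\<exists>R. right_unif_entourage G T H R \<and> equiv (lcosets G H) R \<and> R \<subseteq> E))"

end

theory Submission
  imports Defs
begin


lemma transport:
  fixes P :: "'p monoid" and e :: "'p \<Rightarrow> 'q"
  assumes hP: "haus_topgroup P T" and inj: "inj_on e (carrier P)"
  defines "d \<equiv> inv_into (carrier P) e"
  defines "Q \<equiv> \<lparr>carrier = e ` carrier P, mult = (\<lambda>u v. e (d u \<otimes>\<^bsub>P\<^esub> d v)), one = e \<one>\<^bsub>P\<^esub>\<rparr>"
  defines "TQ \<equiv> pullback_topology (e ` carrier P) d T"
  shows "haus_topgroup Q TQ \<and> cont_hom P T Q TQ e"
proof -
  have tg: "topological_group P T" and HT: "Hausdorff_space T" using hP by (auto simp: haus_topgroup_def)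
  then have gP: "group P" and tsP: "topspace T = carrier P"
    and cm: "continuous_map (prod_topology T T) T (\<lambda>(x, y). x \<otimes>\<^bsub>P\<^esub> y)"
    and ci: "continuous_map T T (\<lambda>x. inv\<^bsub>P\<^esub> x)"
    by (auto simp: topological_group_def)
  interpret P: group P by (rule gP)
  have de[simp]: "x \<in> carrier P \<Longrightarrow> d (e x) = x" for x unfolding d_def using inj by simp
  have ed[simp]: "u \<in> e ` carrier P \<Longrightarrow> e (d u) = u" for u unfolding d_def by (simp add: f_inv_into_f)
  have dc[simp]: "u \<in> e ` carrier P \<Longrightarrow> d u \<in> carrier P" for u unfolding d_def by (simp add: inv_into_into)
  have cQ[simp]: "carrier Q = e ` carrier P" and mQ[simp]: "\<And>u v. u \<otimes>\<^bsub>Q\<^esub> v = e (d u \<otimes>\<^bsub>P\<^esub> d v)"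
    and oQ[simp]: "\<one>\<^bsub>Q\<^esub> = e \<one>\<^bsub>P\<^esub>" by (simp_all add: Q_def)
  have gQ: "group Q"
  proof (rule groupI)
    fix x y z assume "x \<in> carrier Q" "y \<in> carrier Q" "z \<in> carrier Q"
    then show "x \<otimes>\<^bsub>Q\<^esub> y \<otimes>\<^bsub>Q\<^esub> z = x \<otimes>\<^bsub>Q\<^esub> (y \<otimes>\<^bsub>Q\<^esub> z)"
      by (simp add: P.m_assoc)
  next
    fix x assume x: "x \<in> carrier Q"
    then show "\<exists>y\<in>carrier Q. y \<otimes>\<^bsub>Q\<^esub> x = \<one>\<^bsub>Q\<^esub>"
      by (intro bexI[of _ "e (inv\<^bsub>P\<^esub> d x)"]) auto
  qed auto
  interpret Q: group Q by (rule gQ)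
  have hom: "e \<in> hom P Q" by (auto simp: hom_def)
  interpret gh: group_hom P Q e by (simp add: group_hom_def group_hom_axioms_def gP gQ hom)
  have invQ: "inv\<^bsub>Q\<^esub> u = e (inv\<^bsub>P\<^esub> (d u))" if "u \<in> carrier Q" for u
    using gh.hom_inv[of "d u"] that by simp
  have tsQ: "topspace TQ = e ` carrier P"
    by (auto simp: TQ_def topspace_pullback_topology tsP)
  have cd: "continuous_map TQ T d"
    using continuous_map_pullback[OF continuous_map_id, of "e ` carrier P" d] by (simp add: TQ_def)
  have ce: "continuous_map T TQ e"
    unfolding TQ_def
  proof (rule continuous_map_pullback')
    show "continuous_map T T (d \<circ> e)"
      by (rule continuous_map_eq[OF continuous_map_id]) (simp add: tsP)
  qed (auto simp: tsP)
  have cmQ: "continuous_map (prod_topology TQ TQ) TQ (\<lambda>(x, y). x \<otimes>\<^bsub>Q\<^esub> y)"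
  proof -
    have c1: "continuous_map (prod_topology TQ TQ) (prod_topology T T) (\<lambda>(u,v). (d u, d v))"
    proof -
      have "continuous_map (prod_topology TQ TQ) (prod_topology T T) (\<lambda>p. (d (fst p), d (snd p)))"
        by (intro continuous_map_pairedI continuous_map_compose[OF continuous_map_fst cd, unfolded o_def]
            continuous_map_compose[OF continuous_map_snd cd, unfolded o_def])
      then show ?thesis by (simp add: case_prod_beta')
    qed
    have "continuous_map (prod_topology TQ TQ) TQ (e \<circ> ((\<lambda>(x, y). x \<otimes>\<^bsub>P\<^esub> y) \<circ> (\<lambda>(u,v). (d u, d v))))"
      by (rule continuous_map_compose[OF continuous_map_compose[OF c1 cm] ce])
    then show ?thesis by (rule continuous_map_eq) (clarsimp simp: tsQ)
  qed
  have ciQ: "continuous_map TQ TQ (\<lambda>x. inv\<^bsub>Q\<^esub> x)"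
  proof -
    have "continuous_map TQ TQ (e \<circ> ((\<lambda>x. inv\<^bsub>P\<^esub> x) \<circ> d))"
      by (intro continuous_map_compose[OF _ ce] continuous_map_compose[OF cd ci])
    then show ?thesis by (rule continuous_map_eq) (simp add: tsQ invQ del: gh.hom_inv)
  qed
  have HQ: "Hausdorff_space TQ"
    unfolding Hausdorff_space_def
  proof (intro allI impI)
    fix x y assume xy: "x \<in> topspace TQ \<and> y \<in> topspace TQ \<and> x \<noteq> y"
    then have "d x \<noteq> d y" using ed tsQ by metis
    moreover have "d x \<in> topspace T" "d y \<in> topspace T" using xy tsQ tsP by auto
    ultimately obtain U V where UV: "openin T U" "openin T V" "d x \<in> U" "d y \<in> V" "disjnt U V"
      using HT unfolding Hausdorff_space_def by blast
    show "\<exists>U V. openin TQ U \<and> openin TQ V \<and> x \<in> U \<and> y \<in> V \<and> disjnt U V"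
      apply (rule exI[of _ "d -` U \<inter> e ` carrier P"], rule exI[of _ "d -` V \<inter> e ` carrier P"])
      using UV xy tsQ by (auto simp: TQ_def openin_pullback_topology disjnt_def)
  qed
  show ?thesis
    using gQ tsQ cmQ ciQ HQ ce hom
    by (auto simp: haus_topgroup_def topological_group_def cont_hom_def simp del: gh.hom_inv)
qed



definition sd :: "'a set \<Rightarrow> 'a set \<Rightarrow> 'a set" where
  "sd A B = (A - B) \<union> (B - A)"

lemma sd_assoc: "sd (sd A B) C = sd A (sd B C)" by (auto simp: sd_def)
lemma sd_comm: "sd A B = sd B A" by (auto simp: sd_def)
lemma sd_empty[simp]: "sd A {} = A" "sd {} A = A" by (auto simp: sd_def)
lemma sd_self[simp]: "sd A A = {}" by (auto simp: sd_def)
lemma sd_cancel[simp]: "sd A (sd A B) = B" by (auto simp: sd_def)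
lemma sd_cancel2[simp]: "sd (sd A B) B = A" by (auto simp: sd_def)
lemma sd_subset: "A \<subseteq> Y \<Longrightarrow> B \<subseteq> Y \<Longrightarrow> sd A B \<subseteq> Y" by (auto simp: sd_def)
lemma sd_finite: "finite A \<Longrightarrow> finite B \<Longrightarrow> finite (sd A B)" by (auto simp: sd_def)
lemma sd_image: "inj_on f Y \<Longrightarrow> A \<subseteq> Y \<Longrightarrow> B \<subseteq> Y \<Longrightarrow> f ` sd A B = sd (f ` A) (f ` B)"
  unfolding sd_def image_Un
  by (subst inj_on_image_set_diff[of f Y], assumption, blast, blast,
      subst inj_on_image_set_diff[of f Y], assumption, blast, blast, rule refl)
lemma sd4: "sd (sd X a) (sd Z b) = sd (sd (sd X Z) a) b" unfolding sd_def by blast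
lemma sd_insert: "a \<notin> A \<Longrightarrow> insert a A = sd A {a}" by (auto simp: sd_def)

inductive_set NR :: "'a set \<Rightarrow> ('a \<times> 'a) set \<Rightarrow> 'a set set" for Y R where
  NR0: "{} \<in> NR Y R"
| NRs: "A \<in> NR Y R \<Longrightarrow> (a,b) \<in> R \<Longrightarrow> a \<in> Y \<Longrightarrow> b \<in> Y \<Longrightarrow> sd (sd A {a}) {b} \<in> NR Y R"

lemma NR_sub: "A \<in> NR Y R \<Longrightarrow> A \<subseteq> Y \<and> finite A"
  by (induction rule: NR.induct) (auto simp: sd_def)

lemma NR_sd: "B \<in> NR Y R \<Longrightarrow> A \<in> NR Y R \<Longrightarrow> sd A B \<in> NR Y R"
proof (induction B rule: NR.induct)
  case NR0 then show ?case by simp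
next
  case (NRs B a b)
  have "sd A (sd (sd B {a}) {b}) = sd (sd (sd A B) {a}) {b}" by (simp add: sd_assoc)
  then show ?case using NRs by (auto intro: NR.NRs)
qed

lemma NR_mono: "A \<in> NR Y R \<Longrightarrow> R \<subseteq> R' \<Longrightarrow> A \<in> NR Y R'"
  by (induction rule: NR.induct) (auto intro: NR.intros)

lemma NR_image:
  assumes "A \<in> NR Y R" "inj_on f Y" "f ` Y \<subseteq> Y'" "\<And>a b. (a,b) \<in> R \<Longrightarrow> a \<in> Y \<Longrightarrow> b \<in> Y \<Longrightarrow> (f a, f b) \<in> R'"
  shows "f ` A \<in> NR Y' R'"
  using assms(1)
proof (induction rule: NR.induct)
  case NR0 then show ?case by (simp add: NR.NR0)
next
  case (NRs A a b)
  have AY: "A \<subseteq> Y" using NR_sub[OF NRs(1)] by blast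
  have "f ` sd (sd A {a}) {b} = sd (sd (f ` A) {f a}) {f b}"
    using AY NRs assms(2) by (simp add: sd_image sd_subset)
  then show ?case using NRs assms by (auto intro!: NR.NRs)
qed

lemma NR_pairs:
  assumes "finite A0" "A0 \<subseteq> Y" "inj_on f Y" "f ` Y \<subseteq> Y" "\<And>y. y \<in> A0 \<Longrightarrow> (f y, y) \<in> R"
  shows "sd (f ` A0) A0 \<in> NR Y R"
  using assms
proof (induction A0 rule: finite_induct)
  case empty then show ?case by (simp add: NR.NR0)
next
  case (insert y A)
  have yY: "y \<in> Y" "A \<subseteq> Y" using insert(4) by auto
  have fy: "f y \<notin> f ` A"
  proof
    assume "f y \<in> f ` A"
    then obtain x where x: "x \<in> A" "f x = f y" by (metis imageE)
    then have "x = y" using inj_onD[OF insert(5) x(2)] yY by blast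
    then show False using x insert(2) by blast
  qed
  have "sd (f ` insert y A) (insert y A) = sd (sd (f ` A) {f y}) (sd A {y})"
  proof -
    have e1: "f ` insert y A = sd (f`A) {f y}" by (subst image_insert) (rule sd_insert[OF fy])
    have e2: "insert y A = sd A {y}" by (rule sd_insert[OF insert(2)])
    show ?thesis by (metis e1 e2)
  qed
  also have "\<dots> = sd (sd (sd (f ` A) A) {f y}) {y}" by (rule sd4)
  finally have "sd (f ` insert y A) (insert y A) = sd (sd (sd (f ` A) A) {f y}) {y}" .
  moreover have "sd (sd (sd (f ` A) A) {f y}) {y} \<in> NR Y R"
  proof (rule NR.NRs)
    show "sd (f ` A) A \<in> NR Y R" using insert by simp
  qed (use insert in auto)
  ultimately show ?case by simp
qed

lemma card_sd_pair:
  assumes "finite S" "a \<noteq> b"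
  shows "even (card (sd (sd S {a}) {b})) = even (card S)"
proof -
  have c: "even (card (sd T {x})) \<longleftrightarrow> \<not> even (card T)" if fT: "finite T" for T :: "'a set" and x
  proof (cases "x \<in> T")
    case True
    then have e: "sd T {x} = T - {x}" by (auto simp: sd_def)
    obtain n where n: "card T = Suc n" using True fT by (metis card_gt_0_iff empty_iff gr0_implies_Suc)
    show ?thesis unfolding e using True fT n by (simp add: card_Diff_singleton)
  next
    case False
    then have e: "sd T {x} = insert x T" by (auto simp: sd_def)
    show ?thesis unfolding e using False fT by simp
  qed
  have "finite (sd S {a})" using assms by (simp add: sd_finite)
  then show ?thesis using c[OF assms(1), of a] c[of "sd S {a}" b] by simp
qed

lemma NR_parity:
  assumes "A \<in> NR Y R" "equiv Y R" "y \<in> Y"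
  shows "even (card (A \<inter> R `` {y}))"
  using assms(1)
proof (induction rule: NR.induct)
  case NR0 then show ?case by simp
next
  case (NRs A a b)
  let ?K = "R `` {y}"
  have fin: "finite (A \<inter> ?K)" using NR_sub[OF NRs(1)] by blast
  have ab: "a \<in> ?K \<longleftrightarrow> b \<in> ?K" using NRs(2) assms(2)
    unfolding equiv_def sym_def trans_def by blast
  show ?case
  proof (cases "a \<in> ?K")
    case True
    then have "b \<in> ?K" using ab by blast
    have eq: "sd (sd A {a}) {b} \<inter> ?K = sd (sd (A \<inter> ?K) {a}) {b}"
      using True \<open>b \<in> ?K\<close> by (auto simp: sd_def)
    show ?thesis
    proof (cases "a = b")
      case True
      then show ?thesis using NRs by simp
    next
      case False
      then show ?thesis using eq card_sd_pair[OF fin False] NRs by simp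
    qed
  next
    case False
    then have "b \<notin> ?K" using ab by blast
    have "sd (sd A {a}) {b} \<inter> ?K = A \<inter> ?K" using False \<open>b \<notin> ?K\<close> by (auto simp: sd_def)
    then show ?thesis using NRs by simp
  qed
qed



definition act :: "'g monoid \<Rightarrow> 'g \<Rightarrow> 'g set set \<Rightarrow> 'g set set" where
  "act G x A = (\<lambda>C. x <#\<^bsub>G\<^esub> C) ` A"

definition Bs :: "'g monoid \<Rightarrow> 'g set \<Rightarrow> 'g set set set" where
  "Bs G H = {A. A \<subseteq> lcosets G H \<and> finite A}"

definition TB :: "'g monoid \<Rightarrow> 'g set \<Rightarrow> ('g set \<times> 'g set) set set \<Rightarrow> 'g set set topology" where
  "TB G H RR = topology (\<lambda>S. S \<subseteq> Bs G H \<and> (\<forall>A\<in>S. \<exists>R\<in>RR. sd A ` NR (lcosets G H) R \<subseteq> S))"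

locale constr = group G for G :: "'g monoid" (structure) +
  fixes TG :: "'g topology" and H :: "'g set" and RR :: "('g set \<times> 'g set) set set"
  assumes tg: "topological_group G TG" and HG: "Hausdorff_space TG"
  and sub: "subgroup H G"
  and RR_ne: "RR \<noteq> {}"
  and RR_equiv: "R \<in> RR \<Longrightarrow> equiv (lcosets G H) R"
  and RR_dir: "R1 \<in> RR \<Longrightarrow> R2 \<in> RR \<Longrightarrow> \<exists>R3\<in>RR. R3 \<subseteq> R1 \<inter> R2"
  and RR_sep: "y \<in> lcosets G H \<Longrightarrow> z \<in> lcosets G H \<Longrightarrow> y \<noteq> z \<Longrightarrow> \<exists>R\<in>RR. (y,z) \<notin> R"
  and RR_i: "x \<in> carrier G \<Longrightarrow> R \<in> RR \<Longrightarrow> \<exists>R'\<in>RR. \<forall>y z. (y,z) \<in> R' \<longrightarrow> (x <# y, x <# z) \<in> R"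
  and RR_ii: "y \<in> lcosets G H \<Longrightarrow> R \<in> RR \<Longrightarrow> \<exists>W. openin TG W \<and> \<one> \<in> W \<and> (\<forall>u\<in>W. (u <# y, y) \<in> R)"
  and RR_iii: "R \<in> RR \<Longrightarrow> \<exists>W R'. openin TG W \<and> \<one> \<in> W \<and> R' \<in> RR \<and>
                  (\<forall>u\<in>W. \<forall>y z. (y,z) \<in> R' \<longrightarrow> (u <# y, u <# z) \<in> R)"
begin

abbreviation "Y \<equiv> lcosets G H"
abbreviation "B \<equiv> Bs G H"
abbreviation "N R \<equiv> NR Y R"

lemma tsG: "topspace TG = carrier G" using tg by (simp add: topological_group_def)
lemma cmG: "continuous_map (prod_topology TG TG) TG (\<lambda>(x, y). x \<otimes> y)"
  using tg by (simp add: topological_group_def)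
lemma ciG: "continuous_map TG TG (\<lambda>x. inv x)"
  using tg by (simp add: topological_group_def)

lemma cont_mult:
  assumes "continuous_map Z TG a" "continuous_map Z TG b"
  shows "continuous_map Z TG (\<lambda>z. a z \<otimes> b z)"
proof -
  have "continuous_map Z (prod_topology TG TG) (\<lambda>z. (a z, b z))"
    using assms by (simp add: continuous_map_paired)
  from continuous_map_compose[OF this cmG] show ?thesis by (simp add: o_def)
qed

lemma cont_inv:
  assumes "continuous_map Z TG a"
  shows "continuous_map Z TG (\<lambda>z. inv (a z))"
  using continuous_map_compose[OF assms ciG] by (simp add: o_def)

lemma cont_const: "c \<in> carrier G \<Longrightarrow> continuous_map Z TG (\<lambda>z. c)"
  by (simp add: tsG)

lemma H_sub: "H \<subseteq> carrier G" using sub by (rule subgroup.subset)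
lemma H_one: "\<one> \<in> H" using sub by (rule subgroup.one_closed)

lemma Y_def': "C \<in> Y \<longleftrightarrow> (\<exists>a\<in>carrier G. C = a <# H)"
  by (auto simp: lcosets_def)

lemma Y_sub: "C \<in> Y \<Longrightarrow> C \<subseteq> carrier G"
  using H_sub l_coset_subset_G unfolding Y_def' by blast

lemma Y_act: "C \<in> Y \<Longrightarrow> x \<in> carrier G \<Longrightarrow> x <# C \<in> Y"
  using H_sub by (auto simp: Y_def' lcos_m_assoc)

lemma Y_one: "C \<in> Y \<Longrightarrow> \<one> <# C = C"
  using Y_sub lcos_mult_one by blast

lemma Y_assoc: "C \<in> Y \<Longrightarrow> x \<in> carrier G \<Longrightarrow> y \<in> carrier G \<Longrightarrow> x <# (y <# C) = (x \<otimes> y) <# C"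
  using Y_sub lcos_m_assoc by blast

lemma H_Y: "H \<in> Y"
  using H_sub by (auto simp: Y_def' intro!: bexI[of _ \<one>] simp: lcos_mult_one)

lemma inj_lc: "x \<in> carrier G \<Longrightarrow> inj_on (\<lambda>C. x <# C) Y"
proof (rule inj_onI)
  fix C D assume x: "x \<in> carrier G" and CD: "C \<in> Y" "D \<in> Y" "x <# C = x <# D"
  have "C = inv x <# (x <# C)" using Y_assoc[of C "inv x" x] Y_one[of C] x CD by simp
  moreover have "D = inv x <# (x <# D)" using Y_assoc[of D "inv x" x] Y_one[of D] x CD by simp
  ultimately show "C = D" using CD(3) by simp
qed

lemma act_Y: "A \<subseteq> Y \<Longrightarrow> x \<in> carrier G \<Longrightarrow> act G x A \<subseteq> Y"
  by (auto simp: act_def Y_act)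

lemma act_B: "A \<in> B \<Longrightarrow> x \<in> carrier G \<Longrightarrow> act G x A \<in> B"
  by (auto simp: Bs_def act_def Y_act)

lemma act_sd: "A \<subseteq> Y \<Longrightarrow> B' \<subseteq> Y \<Longrightarrow> x \<in> carrier G \<Longrightarrow> act G x (sd A B') = sd (act G x A) (act G x B')"
  unfolding act_def by (rule sd_image[OF inj_lc])

lemma act_act: "A \<subseteq> Y \<Longrightarrow> x \<in> carrier G \<Longrightarrow> y \<in> carrier G \<Longrightarrow> act G x (act G y A) = act G (x \<otimes> y) A"
  unfolding act_def image_image by (rule image_cong[OF refl]) (simp add: Y_assoc subset_iff)

lemma act_one: "A \<subseteq> Y \<Longrightarrow> act G \<one> A = A"
  unfolding act_def using Y_one by (simp add: subset_eq)

lemma act_empty[simp]: "act G x {} = {}" by (simp add: act_def)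

lemma act_NR: "A \<in> N R \<Longrightarrow> x \<in> carrier G \<Longrightarrow> (\<And>a b. (a,b) \<in> R \<Longrightarrow> (x <# a, x <# b) \<in> R') \<Longrightarrow> act G x A \<in> N R'"
  unfolding act_def by (rule NR_image[OF _ inj_lc]) (auto simp: Y_act)

lemma B_sd: "A \<in> B \<Longrightarrow> A' \<in> B \<Longrightarrow> sd A A' \<in> B"
  by (auto simp: Bs_def sd_subset sd_finite)

lemma NR_B: "n \<in> N R \<Longrightarrow> n \<in> B"
  using NR_sub by (auto simp: Bs_def)

lemma istop: "istopology (\<lambda>S. S \<subseteq> B \<and> (\<forall>A\<in>S. \<exists>R\<in>RR. sd A ` N R \<subseteq> S))"
  unfolding istopology_def
proof (rule conjI; intro allI impI)
  fix S U assume S: "S \<subseteq> B \<and> (\<forall>A\<in>S. \<exists>R\<in>RR. sd A ` N R \<subseteq> S)"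
    and U: "U \<subseteq> B \<and> (\<forall>A\<in>U. \<exists>R\<in>RR. sd A ` N R \<subseteq> U)"
  show "S \<inter> U \<subseteq> B \<and> (\<forall>A\<in>S \<inter> U. \<exists>R\<in>RR. sd A ` N R \<subseteq> S \<inter> U)"
  proof (intro conjI ballI)
    show "S \<inter> U \<subseteq> B" using S by (intro le_infI1) (rule conjunct1)
    fix A assume A: "A \<in> S \<inter> U"
    have S2: "\<forall>A\<in>S. \<exists>R\<in>RR. sd A ` N R \<subseteq> S" using S by (rule conjunct2)
    have T2: "\<forall>A\<in>U. \<exists>R\<in>RR. sd A ` N R \<subseteq> U" using U by (rule conjunct2)
    obtain R1 where R1: "R1 \<in> RR" "sd A ` N R1 \<subseteq> S" using S2 A by auto
    obtain R2 where R2: "R2 \<in> RR" "sd A ` N R2 \<subseteq> U" using T2 A by auto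
    obtain R3 where R3: "R3 \<in> RR" "R3 \<subseteq> R1 \<inter> R2" using RR_dir[OF R1(1) R2(1)] by blast
    have "N R3 \<subseteq> N R1" "N R3 \<subseteq> N R2" using R3(2) by (auto intro: NR_mono)
    then have "sd A ` N R3 \<subseteq> S \<inter> U" using R1(2) R2(2) by blast
    then show "\<exists>R\<in>RR. sd A ` N R \<subseteq> S \<inter> U" using R3 by blast
  qed
next
  fix K assume K: "\<forall>S\<in>K. S \<subseteq> B \<and> (\<forall>A\<in>S. \<exists>R\<in>RR. sd A ` N R \<subseteq> S)"
  show "\<Union>K \<subseteq> B \<and> (\<forall>A\<in>\<Union>K. \<exists>R\<in>RR. sd A ` N R \<subseteq> \<Union>K)"
  proof (intro conjI ballI)
    show "\<Union>K \<subseteq> B" using K by (simp add: Sup_le_iff)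
    fix A assume "A \<in> \<Union>K"
    then obtain S where "S \<in> K" "A \<in> S" by blast
    then obtain R where "R \<in> RR" "sd A ` N R \<subseteq> S" using K by meson
    then show "\<exists>R\<in>RR. sd A ` N R \<subseteq> \<Union>K" using \<open>S \<in> K\<close> by blast
  qed
qed

abbreviation "T \<equiv> TB G H RR"

lemma openin_T: "openin T S \<longleftrightarrow> S \<subseteq> B \<and> (\<forall>A\<in>S. \<exists>R\<in>RR. sd A ` N R \<subseteq> S)"
  unfolding TB_def using istop by simp

lemma nbhd_open: assumes "A \<in> B" "R \<in> RR" shows "openin T (sd A ` N R)"
  unfolding openin_T
proof (rule conjI)
  show "sd A ` N R \<subseteq> B" using assms B_sd NR_B by blast
  show "\<forall>A'\<in>sd A ` N R. \<exists>R'\<in>RR. sd A' ` N R' \<subseteq> sd A ` N R"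
  proof
    fix A' assume "A' \<in> sd A ` N R"
    then obtain n where n: "n \<in> N R" "A' = sd A n" by blast
    have "sd A' ` N R \<subseteq> sd A ` N R"
    proof
      fix C assume "C \<in> sd A' ` N R"
      then obtain m where m: "m \<in> N R" "C = sd A' m" by blast
      then have "C = sd A (sd n m)" using n by (simp add: sd_assoc)
      moreover have "sd n m \<in> N R" using NR_sd m n by blast
      ultimately show "C \<in> sd A ` N R" by blast
    qed
    then show "\<exists>R'\<in>RR. sd A' ` N R' \<subseteq> sd A ` N R" using assms by blast
  qed
qed

lemma self_in_nbhd: "A \<in> sd A ` N R"
  using NR.NR0 by (metis image_eqI sd_empty(1))

lemma topspace_T: "topspace T = B"
proof
  show "topspace T \<subseteq> B" unfolding topspace_def using openin_T by auto
  show "B \<subseteq> topspace T"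
  proof
    fix A assume "A \<in> B"
    obtain R where "R \<in> RR" using RR_ne by blast
    then have op: "openin T (sd A ` N R)" by (rule nbhd_open[OF \<open>A \<in> B\<close>])
    show "A \<in> topspace T" by (rule subsetD[OF openin_subset[OF op] self_in_nbhd])
  qed
qed

lemma cont_T:
  assumes "f \<in> topspace X \<rightarrow> B"
    and "\<And>x R. x \<in> topspace X \<Longrightarrow> R \<in> RR \<Longrightarrow> \<exists>U. openin X U \<and> x \<in> U \<and> (\<forall>y\<in>U. sd (f x) (f y) \<in> N R)"
  shows "continuous_map X T f"
  unfolding continuous_map_eq_topcontinuous_at topcontinuous_at_def
proof (intro ballI conjI allI impI)
  fix x assume x: "x \<in> topspace X"
  show "x \<in> topspace X" by fact
  show "f \<in> topspace X \<rightarrow> topspace T" using assms(1) topspace_T by simp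
  fix V assume V: "openin T V \<and> f x \<in> V"
  then obtain R where R: "R \<in> RR" "sd (f x) ` N R \<subseteq> V" using openin_T by blast
  obtain U where U: "openin X U" "x \<in> U" "\<forall>y\<in>U. sd (f x) (f y) \<in> N R" using assms(2)[OF x R(1)] by blast
  have "\<forall>y\<in>U. f y \<in> V"
  proof
    fix y assume "y \<in> U"
    then have "f y = sd (f x) (sd (f x) (f y))" "sd (f x) (f y) \<in> N R" using U by simp_all
    then show "f y \<in> V" using R by (metis image_eqI subsetD)
  qed
  then show "\<exists>U. openin X U \<and> x \<in> U \<and> (\<forall>y\<in>U. f y \<in> V)" using U by blast
qed

lemma cont_into_B: "continuous_map Z T a \<Longrightarrow> z \<in> topspace Z \<Longrightarrow> a z \<in> B"
proof -
  assume c: "continuous_map Z T a" and z: "z \<in> topspace Z"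
  have "a z \<in> topspace T" by (rule subsetD[OF continuous_map_image_subset_topspace[OF c] imageI[OF z]])
  then show ?thesis by (simp only: topspace_T)
qed

lemma cont_into_G: "continuous_map Z TG a \<Longrightarrow> z \<in> topspace Z \<Longrightarrow> a z \<in> carrier G"
proof -
  assume c: "continuous_map Z TG a" and z: "z \<in> topspace Z"
  have "a z \<in> topspace TG" by (rule subsetD[OF continuous_map_image_subset_topspace[OF c] imageI[OF z]])
  then show ?thesis by (simp only: tsG)
qed

lemma cont_nbhd:
  assumes "continuous_map Z T a" "z0 \<in> topspace Z" "R \<in> RR"
  shows "\<exists>U. openin Z U \<and> z0 \<in> U \<and> (\<forall>y\<in>U. sd (a z0) (a y) \<in> N R)"
proof -
  have a0: "a z0 \<in> B" by (rule cont_into_B[OF assms(1,2)])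
  have op: "openin T (sd (a z0) ` N R)" by (rule nbhd_open[OF a0 assms(3)])
  let ?U = "{z \<in> topspace Z. a z \<in> sd (a z0) ` N R}"
  have "openin Z ?U" by (rule openin_continuous_map_preimage[OF assms(1) op])
  moreover have "z0 \<in> ?U" using assms(2) self_in_nbhd by blast
  moreover have "\<forall>y\<in>?U. sd (a z0) (a y) \<in> N R"
  proof
    fix y assume "y \<in> ?U"
    then obtain n where "n \<in> N R" "a y = sd (a z0) n" by blast
    then show "sd (a z0) (a y) \<in> N R" by simp
  qed
  ultimately show ?thesis by blast
qed


lemma sd_swap: "sd (sd a b) (sd c d) = sd (sd a c) (sd b d)" unfolding sd_def by blast

lemma cont_sd:
  assumes ca: "continuous_map Z T a" and cb: "continuous_map Z T b"
  shows "continuous_map Z T (\<lambda>z. sd (a z) (b z))"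
proof (rule cont_T)
  show "(\<lambda>z. sd (a z) (b z)) \<in> topspace Z \<rightarrow> B"
    using cont_into_B[OF ca] cont_into_B[OF cb] B_sd by blast
  fix z0 R assume z0: "z0 \<in> topspace Z" and R: "R \<in> RR"
  obtain U1 where U1: "openin Z U1" "z0 \<in> U1" "\<forall>y\<in>U1. sd (a z0) (a y) \<in> N R"
    using cont_nbhd[OF ca z0 R] by blast
  obtain U2 where U2: "openin Z U2" "z0 \<in> U2" "\<forall>y\<in>U2. sd (b z0) (b y) \<in> N R"
    using cont_nbhd[OF cb z0 R] by blast
  have "\<forall>y\<in>U1 \<inter> U2. sd (sd (a z0) (b z0)) (sd (a y) (b y)) \<in> N R"
  proof
    fix y assume "y \<in> U1 \<inter> U2"
    then have "sd (a z0) (a y) \<in> N R" "sd (b z0) (b y) \<in> N R" using U1 U2 by auto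
    then have "sd (sd (a z0) (a y)) (sd (b z0) (b y)) \<in> N R" by (rule NR_sd[rotated])
    then show "sd (sd (a z0) (b z0)) (sd (a y) (b y)) \<in> N R" by (simp only: sd_swap)
  qed
  moreover have "openin Z (U1 \<inter> U2)" using U1(1) U2(1) by (rule openin_Int)
  ultimately show "\<exists>U. openin Z U \<and> z0 \<in> U \<and> (\<forall>y\<in>U. sd (sd (a z0) (b z0)) (sd (a y) (b y)) \<in> N R)"
    using U1(2) U2(2) by blast
qed

lemma cont_act:
  assumes ca: "continuous_map Z TG a" and cb: "continuous_map Z T b"
  shows "continuous_map Z T (\<lambda>z. act G (a z) (b z))"
proof (rule cont_T)
  show "(\<lambda>z. act G (a z) (b z)) \<in> topspace Z \<rightarrow> B"
    using cont_into_G[OF ca] cont_into_B[OF cb] act_B by blast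
  fix z0 R assume z0: "z0 \<in> topspace Z" and R: "R \<in> RR"
  define x0 where "x0 = a z0"
  define A0 where "A0 = b z0"
  have x0: "x0 \<in> carrier G" unfolding x0_def using cont_into_G[OF ca z0] .
  have A0: "A0 \<in> B" unfolding A0_def using cont_into_B[OF cb z0] .
  then have A0Y: "A0 \<subseteq> Y" and A0f: "finite A0" by (auto simp: Bs_def)
  obtain R1 where R1: "R1 \<in> RR" "\<forall>y z. (y,z) \<in> R1 \<longrightarrow> (x0 <# y, x0 <# z) \<in> R"
    using RR_i[OF x0 R] by blast
  obtain W1 R2 where W1: "openin TG W1" "\<one> \<in> W1" "R2 \<in> RR"
      "\<forall>u\<in>W1. \<forall>y z. (y,z) \<in> R2 \<longrightarrow> (u <# y, u <# z) \<in> R1"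
    using RR_iii[OF R1(1)] by blast
  have "\<forall>y\<in>A0. \<exists>W. openin TG W \<and> \<one> \<in> W \<and> (\<forall>u\<in>W. (u <# y, y) \<in> R1)"
    using RR_ii A0Y R1(1) by blast
  then obtain Wf where Wf: "\<forall>y\<in>A0. openin TG (Wf y) \<and> \<one> \<in> Wf y \<and> (\<forall>u\<in>Wf y. (u <# y, y) \<in> R1)"
    by (rule bchoice[elim_format]) blast
  define Wt where "Wt = W1 \<inter> \<Inter>(Wf ` A0)"
  have Wt_open: "openin TG Wt" unfolding Wt_def
    by (rule openin_Int_Inter) (use W1 Wf A0f in auto)
  have Wt1: "\<one> \<in> Wt" unfolding Wt_def using W1 Wf by blast
  have cm: "continuous_map Z TG (\<lambda>z. inv x0 \<otimes> a z)"
    by (rule cont_mult[OF cont_const ca]) (simp add: x0)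
  define Ua where "Ua = {z \<in> topspace Z. inv x0 \<otimes> a z \<in> Wt}"
  have Ua: "openin Z Ua" unfolding Ua_def by (rule openin_continuous_map_preimage[OF cm Wt_open])
  have z0Ua: "z0 \<in> Ua" unfolding Ua_def using z0 Wt1 x0 by (simp add: x0_def[symmetric])
  obtain Ub where Ub: "openin Z Ub" "z0 \<in> Ub" "\<forall>y\<in>Ub. sd (b z0) (b y) \<in> N R2"
    using cont_nbhd[OF cb z0 W1(3)] by blast
  have "\<forall>z\<in>Ua \<inter> Ub. sd (act G (a z0) (b z0)) (act G (a z) (b z)) \<in> N R"
  proof
    fix z assume z: "z \<in> Ua \<inter> Ub"
    define x where "x = a z"
    define A where "A = b z"
    define u where "u = inv x0 \<otimes> x"
    define n where "n = sd A0 A"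
    have zt: "z \<in> topspace Z" using z Ua_def by blast
    have x: "x \<in> carrier G" unfolding x_def using cont_into_G[OF ca zt] .
    have A: "A \<in> B" unfolding A_def using cont_into_B[OF cb zt] .
    then have AY: "A \<subseteq> Y" by (auto simp: Bs_def)
    have u: "u \<in> carrier G" unfolding u_def using x x0 by simp
    have uWt: "u \<in> Wt" using z unfolding Ua_def u_def x_def by blast
    have xu: "x0 \<otimes> u = x" unfolding u_def using x x0 by (simp add: m_assoc[symmetric])
    have n: "n \<in> N R2" unfolding n_def A0_def A_def using Ub(3) z by blast
    have nY: "n \<subseteq> Y" using NR_sub[OF n] by blast
    have An: "A = sd A0 n" unfolding n_def by simp
    have "act G u n \<in> N R1"
    proof (rule act_NR[OF n u])
      fix y z assume "(y,z) \<in> R2" then show "(u <# y, u <# z) \<in> R1" using W1(4) uWt Wt_def by blast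
    qed
    moreover have "sd (act G u A0) A0 \<in> N R1"
      unfolding act_def
    proof (rule NR_pairs[OF A0f A0Y inj_lc[OF u]])
      show "(\<lambda>C. u <# C) ` Y \<subseteq> Y" using Y_act u by blast
      fix y assume "y \<in> A0" then show "(u <# y, y) \<in> R1" using Wf uWt Wt_def by blast
    qed
    ultimately have "sd (sd (act G u A0) A0) (act G u n) \<in> N R1" by (rule NR_sd)
    moreover have "sd (sd (act G u A0) A0) (act G u n) = sd A0 (act G u A)"
      using An act_sd[OF A0Y nY u] by (simp add: sd_def; blast)
    ultimately have "sd A0 (act G u A) \<in> N R1" by simp
    then have "act G x0 (sd A0 (act G u A)) \<in> N R"
      by (rule act_NR[OF _ x0]) (use R1(2) in blast)
    moreover have "act G x0 (sd A0 (act G u A)) = sd (act G x0 A0) (act G x A)"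
      using act_sd[OF A0Y act_Y[OF AY u] x0] act_act[OF AY x0 u] xu by simp
    ultimately show "sd (act G (a z0) (b z0)) (act G (a z) (b z)) \<in> N R"
      unfolding x0_def A0_def x_def A_def by simp
  qed
  moreover have "openin Z (Ua \<inter> Ub)" using Ua Ub(1) by (rule openin_Int)
  ultimately show "\<exists>U. openin Z U \<and> z0 \<in> U \<and> (\<forall>y\<in>U. sd (act G (a z0) (b z0)) (act G (a y) (b y)) \<in> N R)"
    using z0Ua Ub(2) by blast
qed

lemma Haus_T: "Hausdorff_space T"
  unfolding Hausdorff_space_def
proof (intro allI impI)
  fix A A' assume AA: "A \<in> topspace T \<and> A' \<in> topspace T \<and> A \<noteq> A'"
  then have A: "A \<in> B" and A': "A' \<in> B" and ne: "A \<noteq> A'" using topspace_T by auto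
  define D where "D = sd A A'"
  have D: "D \<subseteq> Y" "finite D" using B_sd[OF A A'] unfolding D_def Bs_def by auto
  have "D \<noteq> {}" using ne unfolding D_def sd_def by blast
  then obtain y where y: "y \<in> D" by blast
  have yY: "y \<in> Y" using y D by blast
  have sepF: "\<exists>R\<in>RR. \<forall>z\<in>F. (y,z) \<notin> R" if "finite F" "F \<subseteq> Y" "y \<notin> F" for F
    using that
  proof (induction F rule: finite_induct)
    case empty then show ?case using RR_ne by blast
  next
    case (insert z F)
    then obtain R1 where R1: "R1 \<in> RR" "\<forall>z\<in>F. (y,z) \<notin> R1" by auto
    obtain R2 where R2: "R2 \<in> RR" "(y,z) \<notin> R2" using RR_sep[OF yY, of z] insert by auto
    obtain R3 where R3: "R3 \<in> RR" "R3 \<subseteq> R1 \<inter> R2" using RR_dir[OF R1(1) R2(1)] by blast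
    then show ?case using R1 R2 by (intro bexI[of _ R3]) auto
  qed
  have F: "finite (D - {y})" "D - {y} \<subseteq> Y" "y \<notin> D - {y}" using D by auto
  obtain R where R: "R \<in> RR" "\<forall>z\<in>D - {y}. (y,z) \<notin> R" using sepF[OF F] by blast
  have eq: "D \<inter> R `` {y} = {y}"
  proof
    show "D \<inter> R `` {y} \<subseteq> {y}" using R(2) by blast
    have "(y,y) \<in> R" using RR_equiv[OF R(1)] yY unfolding equiv_def refl_on_def by blast
    then show "{y} \<subseteq> D \<inter> R `` {y}" using y by blast
  qed
  have DN: "D \<notin> N R"
  proof
    assume "D \<in> N R"
    from NR_parity[OF this RR_equiv[OF R(1)] yY] show False using eq by simp
  qed
  show "\<exists>U V. openin T U \<and> openin T V \<and> A \<in> U \<and> A' \<in> V \<and> disjnt U V"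
  proof (intro exI conjI)
    show "openin T (sd A ` N R)" by (rule nbhd_open[OF A R(1)])
    show "openin T (sd A' ` N R)" by (rule nbhd_open[OF A' R(1)])
    show "A \<in> sd A ` N R" "A' \<in> sd A' ` N R" by (rule self_in_nbhd)+
    show "disjnt (sd A ` N R) (sd A' ` N R)"
    unfolding disjnt_iff
    proof (intro allI notI)
      fix C assume "C \<in> sd A ` N R \<and> C \<in> sd A' ` N R"
      then obtain n1 n2 where n: "n1 \<in> N R" "n2 \<in> N R" "C = sd A n1" "C = sd A' n2" by blast
      then have "D = sd n1 n2" unfolding D_def by (metis sd_assoc sd_cancel sd_comm)
      then show False using DN NR_sd[OF n(2) n(1)] by simp
    qed
  qed
qed

end



definition PG :: "'g monoid \<Rightarrow> 'g set \<Rightarrow> ('g set set \<times> 'g) monoid" where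
  "PG G H = \<lparr>carrier = Bs G H \<times> carrier G,
     mult = (\<lambda>p q. (sd (fst p) (act G (snd p) (fst q)), snd p \<otimes>\<^bsub>G\<^esub> snd q)),
     one = ({}, \<one>\<^bsub>G\<^esub>)\<rparr>"

definition gmap :: "'g \<Rightarrow> 'g set set \<times> 'g" where "gmap x = ({}, x)"
definition hmap :: "'g monoid \<Rightarrow> 'g set \<Rightarrow> 'g \<Rightarrow> 'g set set \<times> 'g" where
  "hmap G H x = (sd {H} (act G x {H}), x)"

context constr begin

abbreviation "P \<equiv> PG G H"

lemma P_carrier: "carrier P = B \<times> carrier G" by (simp add: PG_def)
lemma P_mult: "p \<otimes>\<^bsub>P\<^esub> q = (sd (fst p) (act G (snd p) (fst q)), snd p \<otimes> snd q)" by (simp add: PG_def)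
lemma P_one: "\<one>\<^bsub>P\<^esub> = ({}, \<one>)" by (simp add: PG_def)

lemma BY: "A \<in> B \<Longrightarrow> A \<subseteq> Y" by (simp add: Bs_def)

lemma group_P: "group P"
proof (rule groupI)
  fix p q assume "p \<in> carrier P" "q \<in> carrier P"
  then show "p \<otimes>\<^bsub>P\<^esub> q \<in> carrier P"
    by (auto simp: P_carrier P_mult intro!: B_sd act_B)
next
  show "\<one>\<^bsub>P\<^esub> \<in> carrier P" by (simp add: P_carrier P_one Bs_def)
next
  fix p q r assume pqr: "p \<in> carrier P" "q \<in> carrier P" "r \<in> carrier P"
  obtain A x where p: "p = (A, x)" "A \<in> B" "x \<in> carrier G" using pqr(1) by (auto simp: P_carrier)
  obtain A' y where q: "q = (A', y)" "A' \<in> B" "y \<in> carrier G" using pqr(2) by (auto simp: P_carrier)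
  obtain A'' z where r: "r = (A'', z)" "A'' \<in> B" "z \<in> carrier G" using pqr(3) by (auto simp: P_carrier)
  have "act G x (sd A' (act G y A'')) = sd (act G x A') (act G (x \<otimes> y) A'')"
    using act_sd[OF BY[OF q(2)] act_Y[OF BY[OF r(2)] q(3)] p(3)] act_act[OF BY[OF r(2)] p(3) q(3)] by simp
  then show "p \<otimes>\<^bsub>P\<^esub> q \<otimes>\<^bsub>P\<^esub> r = p \<otimes>\<^bsub>P\<^esub> (q \<otimes>\<^bsub>P\<^esub> r)"
    using p q r by (simp add: P_mult sd_assoc m_assoc)
next
  fix p assume "p \<in> carrier P"
  then obtain A x where p: "p = (A, x)" "A \<in> B" "x \<in> carrier G" by (auto simp: P_carrier)
  show "\<one>\<^bsub>P\<^esub> \<otimes>\<^bsub>P\<^esub> p = p" using p by (simp add: P_mult P_one act_one BY)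
  show "\<exists>q\<in>carrier P. q \<otimes>\<^bsub>P\<^esub> p = \<one>\<^bsub>P\<^esub>"
  proof (intro bexI)
    show "(act G (inv x) A, inv x) \<otimes>\<^bsub>P\<^esub> p = \<one>\<^bsub>P\<^esub>" using p by (simp add: P_mult P_one)
    show "(act G (inv x) A, inv x) \<in> carrier P" using p by (simp add: P_carrier act_B)
  qed
qed

lemma inv_P: assumes "A \<in> B" "x \<in> carrier G"
  shows "inv\<^bsub>P\<^esub> (A, x) = (act G (inv x) A, inv x)"
proof -
  interpret P: group P by (rule group_P)
  show ?thesis
    by (rule P.inv_equality) (use assms in \<open>simp_all add: P_mult P_one P_carrier act_B\<close>)
qed

abbreviation "TP \<equiv> prod_topology T TG"

lemma tsP: "topspace TP = carrier P" by (simp add: topspace_T tsG P_carrier)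

lemma cfst: "continuous_map Z TP p \<Longrightarrow> continuous_map Z T (\<lambda>z. fst (p z))"
  using continuous_map_fst_of[of Z T TG p] by (simp add: o_def)
lemma csnd: "continuous_map Z TP p \<Longrightarrow> continuous_map Z TG (\<lambda>z. snd (p z))"
  using continuous_map_snd_of[of Z T TG p] by (simp add: o_def)

lemma cont_Pmult:
  assumes "continuous_map Z TP p" "continuous_map Z TP q"
  shows "continuous_map Z TP (\<lambda>z. p z \<otimes>\<^bsub>P\<^esub> q z)"
  unfolding P_mult
  by (intro continuous_map_pairedI cont_sd cont_act cont_mult cfst csnd assms)

lemma cont_Pinv:
  assumes "continuous_map Z TP p"
  shows "continuous_map Z TP (\<lambda>z. inv\<^bsub>P\<^esub> (p z))"
proof -
  have "continuous_map Z TP (\<lambda>z. (act G (inv (snd (p z))) (fst (p z)), inv (snd (p z))))"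
    by (intro continuous_map_pairedI cont_act cont_inv cfst csnd assms)
  then show ?thesis
  proof (rule continuous_map_eq)
    fix z assume "z \<in> topspace Z"
    then have "p z \<in> carrier P" using assms tsP
      by (metis continuous_map_image_subset_topspace image_subset_iff)
    then show "(act G (inv (snd (p z))) (fst (p z)), inv (snd (p z))) = inv\<^bsub>P\<^esub> (p z)"
      by (cases "p z") (simp add: inv_P P_carrier)
  qed
qed

lemma haus_P: "haus_topgroup P TP"
  unfolding haus_topgroup_def topological_group_def
proof (intro conjI)
  show "group P" by (rule group_P)
  show "topspace TP = carrier P" by (rule tsP)
  have "continuous_map (prod_topology TP TP) TP (\<lambda>w. fst w \<otimes>\<^bsub>P\<^esub> snd w)"
    by (intro cont_Pmult continuous_map_fst continuous_map_snd)
  then show "continuous_map (prod_topology TP TP) TP (\<lambda>(x, y). x \<otimes>\<^bsub>P\<^esub> y)"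
    by (simp add: case_prod_beta')
  show "continuous_map TP TP (\<lambda>x. inv\<^bsub>P\<^esub> x)"
    using cont_Pinv[OF continuous_map_id] by (simp add: id_def)
  show "Hausdorff_space TP" using Haus_T HG by (simp add: Hausdorff_space_prod_topology)
qed

lemma g_cont_hom: "cont_hom G TG P TP gmap"
  unfolding cont_hom_def
proof
  show "gmap \<in> hom G P"
    by (rule homI) (auto simp: gmap_def P_carrier P_mult Bs_def)
  have "continuous_map TG TP (\<lambda>x. ({}, x))"
    by (intro continuous_map_pairedI continuous_map_id[unfolded id_def]) (simp add: topspace_T Bs_def)
  then show "continuous_map TG TP gmap" by (rule continuous_map_eq) (simp add: gmap_def)
qed

lemma HB: "{H} \<in> B" using H_Y by (simp add: Bs_def)

lemma h_cont_hom: "cont_hom G TG P TP (hmap G H)"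
  unfolding cont_hom_def
proof
  show "hmap G H \<in> hom G P"
  proof (rule homI)
    fix x assume "x \<in> carrier G"
    then show "hmap G H x \<in> carrier P" using HB by (simp add: hmap_def P_carrier B_sd act_B)
  next
    fix x y assume x: "x \<in> carrier G" and y: "y \<in> carrier G"
    have HY: "{H} \<subseteq> Y" using H_Y by simp
    have "act G x (sd {H} (act G y {H})) = sd (act G x {H}) (act G (x \<otimes> y) {H})"
      using act_sd[OF HY act_Y[OF HY y] x] act_act[OF HY x y] by simp
    then show "hmap G H (x \<otimes> y) = hmap G H x \<otimes>\<^bsub>P\<^esub> hmap G H y"
      by (simp add: hmap_def P_mult sd_assoc)
  qed
  have "continuous_map TG TP (\<lambda>x. (sd {H} (act G x {H}), x))"
    by (intro continuous_map_pairedI cont_sd cont_act continuous_map_id[unfolded id_def])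
       (simp_all add: topspace_T HB)
  then show "continuous_map TG TP (hmap G H)" by (rule continuous_map_eq) (simp add: hmap_def)
qed

lemma gh_eq: "gmap x = hmap G H x \<Longrightarrow> x <# H = H"
  by (auto simp: gmap_def hmap_def act_def sd_def)

end

definition rep :: "'g set \<Rightarrow> 'g" where "rep C = (SOME a. a \<in> C)"
definition enc :: "'g set set \<times> 'g \<Rightarrow> 'g list" where
  "enc p = snd p # (SOME l. set l = rep ` fst p)"

lemma cont_hom_comp: "cont_hom G TG P TP g \<Longrightarrow> cont_hom P TP Q TQ e \<Longrightarrow> cont_hom G TG Q TQ (e \<circ> g)"
  unfolding cont_hom_def using hom_compose continuous_map_compose by blast

context constr begin

lemma rep_in: "C \<in> Y \<Longrightarrow> rep C \<in> C"
proof -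
  assume "C \<in> Y"
  then obtain a where a: "a \<in> carrier G" "C = a <# H" by (auto simp: Y_def')
  then have "a \<in> C" using H_one by (force simp: l_coset_def)
  then show ?thesis unfolding rep_def by (rule someI)
qed

lemma rep_inj: "inj_on rep Y"
proof (rule inj_onI)
  fix C D assume C: "C \<in> Y" and D: "D \<in> Y" and eq: "rep C = rep D"
  obtain a where a: "a \<in> carrier G" "C = a <# H" using C by (auto simp: Y_def')
  obtain b where b: "b \<in> carrier G" "D = b <# H" using D by (auto simp: Y_def')
  have "C = rep C <# H" using l_repr_independence[OF _ a(1) sub, of "rep C"] rep_in[OF C] a by simp
  moreover have "D = rep D <# H" using l_repr_independence[OF _ b(1) sub, of "rep D"] rep_in[OF D] b by simp
  ultimately show "C = D" using eq by simp
qed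

lemma enc_inj: "inj_on enc (carrier P)"
proof (rule inj_onI)
  fix p q assume p: "p \<in> carrier P" and q: "q \<in> carrier P" and eq: "enc p = enc q"
  have fin: "finite (rep ` fst p)" "finite (rep ` fst q)" using p q by (auto simp: P_carrier Bs_def)
  have s1: "set (SOME l. set l = rep ` fst p) = rep ` fst p" using someI_ex[OF finite_list[OF fin(1)]] .
  have s2: "set (SOME l. set l = rep ` fst q) = rep ` fst q" using someI_ex[OF finite_list[OF fin(2)]] .
  have "snd p = snd q" "(SOME l. set l = rep ` fst p) = (SOME l. set l = rep ` fst q)"
    using eq by (simp_all add: enc_def)
  then have "rep ` fst p = rep ` fst q" using s1 s2 by metis
  moreover have "fst p \<subseteq> Y" "fst q \<subseteq> Y" using p q by (auto simp: P_carrier Bs_def)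
  ultimately have "fst p = fst q" using rep_inj by (simp add: inj_on_image_eq_iff)
  then show "p = q" using \<open>snd p = snd q\<close> by (simp add: prod_eq_iff)
qed

lemma lcos_H: "y \<in> H \<Longrightarrow> y <# H = H"
proof -
  assume y: "y \<in> H"
  have "y <# H \<subseteq> H" using y sub by (auto simp: l_coset_def subgroup.m_closed)
  moreover have "H \<subseteq> y <# H"
  proof
    fix h assume h: "h \<in> H"
    have "inv y \<otimes> h \<in> H" using y h sub by (simp add: subgroup.m_closed subgroup.m_inv_closed)
    moreover have "h = y \<otimes> (inv y \<otimes> h)" using y h H_sub
      by (metis inv_solve_left' m_closed inv_closed subsetD m_assoc r_inv l_one)
    ultimately show "h \<in> y <# H" by (force simp: l_coset_def)
  qed
  ultimately show ?thesis by blast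
qed

lemma constr_main:
  assumes epi: "\<And>(Q :: 'g list monoid) TQ g h. haus_topgroup Q TQ \<Longrightarrow> cont_hom G TG Q TQ g \<Longrightarrow>
      cont_hom G TG Q TQ h \<Longrightarrow> (\<forall>y\<in>H. g y = h y) \<Longrightarrow> (\<forall>y\<in>carrier G. g y = h y)"
  shows "carrier G \<subseteq> H"
proof
  fix y assume y: "y \<in> carrier G"
  define d where "d = inv_into (carrier P) enc"
  define Q where "Q = \<lparr>carrier = enc ` carrier P, mult = (\<lambda>u v. enc (d u \<otimes>\<^bsub>P\<^esub> d v)), one = enc \<one>\<^bsub>P\<^esub>\<rparr>"
  define TQ where "TQ = pullback_topology (enc ` carrier P) d TP"
  have tr: "haus_topgroup Q TQ \<and> cont_hom P TP Q TQ enc"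
    unfolding Q_def TQ_def d_def by (rule transport[OF haus_P enc_inj])
  have cg: "cont_hom G TG Q TQ (enc \<circ> gmap)" using cont_hom_comp[OF g_cont_hom] tr by blast
  have ch: "cont_hom G TG Q TQ (enc \<circ> hmap G H)" using cont_hom_comp[OF h_cont_hom] tr by blast
  have "\<forall>z\<in>H. (enc \<circ> gmap) z = (enc \<circ> hmap G H) z"
  proof
    fix z assume "z \<in> H"
    then have "act G z {H} = {H}" using lcos_H by (simp add: act_def)
    then show "(enc \<circ> gmap) z = (enc \<circ> hmap G H) z" by (simp add: gmap_def hmap_def)
  qed
  then have "(enc \<circ> gmap) y = (enc \<circ> hmap G H) y" using epi[OF conjunct1[OF tr] cg ch] y by blast
  moreover have "gmap y \<in> carrier P" "hmap G H y \<in> carrier P"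
    using g_cont_hom h_cont_hom y by (auto simp: cont_hom_def hom_def)
  ultimately have "gmap y = hmap G H y" using enc_inj by (simp add: inj_on_eq_iff)
  then have "y <# H = H" by (rule gh_eq)
  moreover have "y \<in> y <# H" using H_one y by (force simp: l_coset_def)
  ultimately show "y \<in> H" by simp
qed

end



locale grp = group G for G :: "'g monoid" (structure)

context grp begin

lemma tg_ts: "topological_group G TG \<Longrightarrow> topspace TG = carrier G"
  by (simp add: topological_group_def)

lemma tg_mult:
  assumes tg: "topological_group G TG" and "continuous_map Z TG a" "continuous_map Z TG b"
  shows "continuous_map Z TG (\<lambda>z. a z \<otimes> b z)"
proof -
  have cm: "continuous_map (prod_topology TG TG) TG (\<lambda>(x, y). x \<otimes> y)" using tg by (simp add: topological_group_def)
  have "continuous_map Z (prod_topology TG TG) (\<lambda>z. (a z, b z))"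
    using assms by (simp add: continuous_map_paired)
  from continuous_map_compose[OF this cm] show ?thesis by (simp add: o_def)
qed

lemma tg_inv:
  assumes tg: "topological_group G TG" and "continuous_map Z TG a"
  shows "continuous_map Z TG (\<lambda>z. inv (a z))"
proof -
  have ci: "continuous_map TG TG (\<lambda>x. inv x)" using tg by (simp add: topological_group_def)
  from continuous_map_compose[OF assms(2) ci] show ?thesis by (simp add: o_def)
qed

lemma tg_const: "topological_group G TG \<Longrightarrow> c \<in> carrier G \<Longrightarrow> continuous_map Z TG (\<lambda>z. c)"
  by (simp add: tg_ts)

lemma tg_id: "continuous_map TG TG (\<lambda>x. x)"
  using continuous_map_id by (simp add: id_def)

lemma closure_subgroup:
  assumes tg: "topological_group G TG" and K: "subgroup K G"
  shows "subgroup (TG closure_of K) G"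
proof (rule subgroupI)
  have ts: "topspace TG = carrier G" using tg by (rule tg_ts)
  have Ksub: "K \<subseteq> topspace TG" using K ts subgroup.subset by blast
  show "TG closure_of K \<subseteq> carrier G" using closure_of_subset_topspace[of TG K] ts by simp
  have "\<one> \<in> TG closure_of K" using closure_of_subset[OF Ksub] subgroup.one_closed[OF K] by (rule subsetD)
  then show "TG closure_of K \<noteq> {}" by (metis empty_iff)
  fix a assume a: "a \<in> TG closure_of K"
  have ci: "continuous_map TG TG (\<lambda>x. inv x)" using tg by (simp add: topological_group_def)
  have "(\<lambda>x. inv x) ` (TG closure_of K) \<subseteq> TG closure_of ((\<lambda>x. inv x) ` K)"
    by (rule continuous_map_image_closure_subset[OF ci])
  also have "\<dots> \<subseteq> TG closure_of K"
    by (rule closure_of_mono) (auto intro: subgroup.m_inv_closed[OF K])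
  finally show "inv a \<in> TG closure_of K" using a by blast
  fix b assume b: "b \<in> TG closure_of K"
  have cm: "continuous_map (prod_topology TG TG) TG (\<lambda>(x, y). x \<otimes> y)" using tg by (simp add: topological_group_def)
  have "(\<lambda>(x, y). x \<otimes> y) ` ((prod_topology TG TG) closure_of (K \<times> K)) \<subseteq> TG closure_of ((\<lambda>(x, y). x \<otimes> y) ` (K \<times> K))"
    by (rule continuous_map_image_closure_subset[OF cm])
  also have "\<dots> \<subseteq> TG closure_of K"
    by (rule closure_of_mono) (auto intro: subgroup.m_closed[OF K])
  finally show "a \<otimes> b \<in> TG closure_of K" using a b by (force simp: closure_of_Times)
qed

lemma l_coset_elem_eq: "subgroup H G \<Longrightarrow> a \<in> carrier G \<Longrightarrow> u \<in> carrier G \<Longrightarrow> inv a \<otimes> u \<otimes> a \<in> H \<Longrightarrow> u <# (a <# H) = a <# H"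
proof -
  assume sub: "subgroup H G" and a: "a \<in> carrier G" and u: "u \<in> carrier G" and h: "inv a \<otimes> u \<otimes> a \<in> H"
  have Hs: "H \<subseteq> carrier G" using sub subgroup.subset by blast
  have "u \<otimes> a = a \<otimes> (inv a \<otimes> u \<otimes> a)" using a u by (simp add: m_assoc[symmetric])
  then have "u \<otimes> a \<in> a <# H" using h by (force simp: l_coset_def)
  then have "a <# H = (u \<otimes> a) <# H" by (rule l_repr_independence[OF _ a sub])
  then show ?thesis using lcos_m_assoc[OF Hs u a] by simp
qed

lemma case3:
  assumes tg: "topological_group G TG" and HG: "Hausdorff_space TG" and sub: "subgroup H G"
    and op: "openin TG H"
  shows "constr G TG H {Id_on (lcosets G H)}"
proof (intro constr.intro constr_axioms.intro)
  show "group G" by (rule is_group)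
  have Hs: "H \<subseteq> carrier G" using sub subgroup.subset by blast
  have Yact: "x <# C \<in> lcosets G H" if "C \<in> lcosets G H" "x \<in> carrier G" for x C
    using that Hs by (auto simp: lcosets_def lcos_m_assoc)
  show "topological_group G TG" "Hausdorff_space TG" "subgroup H G" by fact+
  show "{Id_on (lcosets G H)} \<noteq> {}" by simp
  show "\<And>R. R \<in> {Id_on (lcosets G H)} \<Longrightarrow> equiv (lcosets G H) R" by (auto simp: equiv_def refl_on_def sym_def trans_def)
  show "\<And>R1 R2. R1 \<in> {Id_on (lcosets G H)} \<Longrightarrow> R2 \<in> {Id_on (lcosets G H)} \<Longrightarrow> \<exists>R3\<in>{Id_on (lcosets G H)}. R3 \<subseteq> R1 \<inter> R2" by simp
  show "\<And>y z. y \<in> lcosets G H \<Longrightarrow> z \<in> lcosets G H \<Longrightarrow> y \<noteq> z \<Longrightarrow> \<exists>R\<in>{Id_on (lcosets G H)}. (y, z) \<notin> R" by (auto simp: Id_on_def)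
  show "\<And>x R. x \<in> carrier G \<Longrightarrow> R \<in> {Id_on (lcosets G H)} \<Longrightarrow> \<exists>R'\<in>{Id_on (lcosets G H)}. \<forall>y z. (y, z) \<in> R' \<longrightarrow> (x <# y, x <# z) \<in> R"
    using Yact by auto
  show "\<And>R. R \<in> {Id_on (lcosets G H)} \<Longrightarrow> \<exists>W R'. openin TG W \<and> \<one> \<in> W \<and> R' \<in> {Id_on (lcosets G H)} \<and> (\<forall>u\<in>W. \<forall>y z. (y, z) \<in> R' \<longrightarrow> (u <# y, u <# z) \<in> R)"
  proof -
    fix R assume "R \<in> {Id_on (lcosets G H)}"
    then show "\<exists>W R'. openin TG W \<and> \<one> \<in> W \<and> R' \<in> {Id_on (lcosets G H)} \<and> (\<forall>u\<in>W. \<forall>y z. (y, z) \<in> R' \<longrightarrow> (u <# y, u <# z) \<in> R)"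
    proof (intro exI[of _ "carrier G"] exI[of _ "Id_on (lcosets G H)"] conjI)
      show "openin TG (carrier G)" using openin_topspace[of TG] tg_ts[OF tg] by simp
    qed (use Yact \<open>R \<in> {Id_on (lcosets G H)}\<close> in auto)
  qed
  show "\<And>y R. y \<in> lcosets G H \<Longrightarrow> R \<in> {Id_on (lcosets G H)} \<Longrightarrow> \<exists>W. openin TG W \<and> \<one> \<in> W \<and> (\<forall>u\<in>W. (u <# y, y) \<in> R)"
  proof -
    fix y R assume y: "y \<in> lcosets G H" and R: "R \<in> {Id_on (lcosets G H)}"
    obtain a where a: "a \<in> carrier G" "y = a <# H" using y by (auto simp: lcosets_def)
    have c: "continuous_map TG TG (\<lambda>u. inv a \<otimes> u \<otimes> a)"
      by (intro tg_mult[OF tg] tg_const[OF tg] tg_id) (simp_all add: a)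
    define W where "W = {u \<in> topspace TG. inv a \<otimes> u \<otimes> a \<in> H}"
    have "openin TG W" unfolding W_def by (rule openin_continuous_map_preimage[OF c op])
    moreover have "\<one> \<in> W" unfolding W_def using a tg_ts[OF tg] subgroup.one_closed[OF sub] by simp
    moreover have "\<forall>u\<in>W. (u <# y, y) \<in> R"
    proof
      fix u assume "u \<in> W"
      then have u: "u \<in> carrier G" "inv a \<otimes> u \<otimes> a \<in> H" unfolding W_def using tg_ts[OF tg] by auto
      have "u <# y = y" using l_coset_elem_eq[OF sub a(1) u] a(2) by simp
      then show "(u <# y, y) \<in> R" using R y by (simp add: Id_on_def)
    qed
    ultimately show "\<exists>W. openin TG W \<and> \<one> \<in> W \<and> (\<forall>u\<in>W. (u <# y, y) \<in> R)" by blast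
  qed
qed

lemma re_char: "(C, D) \<in> right_entourage G H U \<longleftrightarrow> C \<in> lcosets G H \<and> D \<in> lcosets G H \<and> D \<subseteq> U <#> C"
  unfolding right_entourage_def lcosets_def by blast

lemma re_mono: "(C, D) \<in> right_entourage G H U \<Longrightarrow> U \<subseteq> U' \<Longrightarrow> (C, D) \<in> right_entourage G H U'"
  unfolding re_char set_mult_def by blast

lemma re_sub: "right_entourage G H U \<subseteq> lcosets G H \<times> lcosets G H"
  using re_char by auto

lemma setmult_mem: "u \<in> U \<Longrightarrow> c \<in> C \<Longrightarrow> u \<otimes> c \<in> U <#> C"
  unfolding set_mult_def by blast

lemma setmult_memE: "t \<in> U <#> C \<Longrightarrow> (\<And>u c. u \<in> U \<Longrightarrow> c \<in> C \<Longrightarrow> t = u \<otimes> c \<Longrightarrow> P) \<Longrightarrow> P"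
  unfolding set_mult_def by blast

lemma lcos_mem: "h \<in> H \<Longrightarrow> a \<otimes> h \<in> a <# H"
  unfolding l_coset_def by blast

lemma lcos_memE: "t \<in> a <# H \<Longrightarrow> (\<And>h. h \<in> H \<Longrightarrow> t = a \<otimes> h \<Longrightarrow> P) \<Longrightarrow> P"
  unfolding l_coset_def by blast

lemma case2:
  assumes tg: "topological_group G TG" and sub: "subgroup H G" and na: "non_archimedean_group G TG"
  shows "right_unif_non_archimedean G TG H"
  unfolding right_unif_non_archimedean_def
proof (intro allI impI)
  fix E assume E: "right_unif_entourage G TG H E"
  then obtain U where U: "nhd_one G TG U" "right_entourage G H U \<subseteq> E"
    unfolding right_unif_entourage_def by blast
  then obtain W where W: "openin TG W" "\<one> \<in> W" "W \<subseteq> U" unfolding nhd_one_def by blast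
  obtain V where V: "subgroup V G" "openin TG V" "V \<subseteq> W" using na W unfolding non_archimedean_group_def by blast
  have Hs: "H \<subseteq> carrier G" using sub subgroup.subset by blast
  have Vs: "V \<subseteq> carrier G" using V(1) subgroup.subset by blast
  let ?R = "right_entourage G H V"
  have nV: "nhd_one G TG V" unfolding nhd_one_def using V Vs tg_ts[OF tg] subgroup.one_closed[OF V(1)] by blast
  have ent: "right_unif_entourage G TG H ?R"
    unfolding right_unif_entourage_def using re_sub nV by blast
  have Ysub: "C \<subseteq> carrier G" if "C \<in> lcosets G H" for C
    using that Hs l_coset_subset_G by (auto simp: lcosets_def)
  have eq: "equiv (lcosets G H) ?R"
    unfolding equiv_def refl_on_def sym_def trans_def
  proof (intro conjI allI impI ballI)
    show "?R \<subseteq> lcosets G H \<times> lcosets G H" by (rule re_sub)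
  next
    fix C assume C: "C \<in> lcosets G H"
    have "C \<subseteq> V <#> C"
    proof
      fix c assume "c \<in> C"
      then have "\<one> \<otimes> c \<in> V <#> C" by (intro setmult_mem subgroup.one_closed[OF V(1)])
      then show "c \<in> V <#> C" using \<open>c \<in> C\<close> Ysub[OF C] by auto
    qed
    then show "(C, C) \<in> ?R" using C by (simp add: re_char)
  next
    fix C D assume "(C, D) \<in> ?R"
    then have C: "C \<in> lcosets G H" and D: "D \<in> lcosets G H" and DC: "D \<subseteq> V <#> C" by (auto simp: re_char)
    obtain a where a: "a \<in> carrier G" "C = a <# H" using C by (auto simp: lcosets_def)
    obtain b where b: "b \<in> carrier G" "D = b <# H" using D by (auto simp: lcosets_def)
    have "b \<in> D" using b lcos_mem[OF subgroup.one_closed[OF sub], of b] by simp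
    then obtain v c where vc: "v \<in> V" "c \<in> C" "b = v \<otimes> c" using DC by (blast elim: setmult_memE)
    obtain h where h: "h \<in> H" "c = a \<otimes> h" using vc(2) a(2) by (blast elim: lcos_memE)
    have v: "v \<in> carrier G" using vc Vs by blast
    have hc: "h \<in> carrier G" using h Hs by blast
    have "C \<subseteq> V <#> D"
    proof
      fix t assume "t \<in> C"
      then obtain h' where h': "h' \<in> H" "t = a \<otimes> h'" using a(2) by (blast elim: lcos_memE)
      have h'c: "h' \<in> carrier G" using h' Hs by blast
      have aux: "a \<otimes> h \<otimes> inv h = a" using a(1) hc by (simp add: m_assoc)
      have "t = inv v \<otimes> (b \<otimes> (inv h \<otimes> h'))"
        using h' vc(3) h(2) a(1) v hc h'c aux by (simp add: m_assoc[symmetric])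
      moreover have "b \<otimes> (inv h \<otimes> h') \<in> D" using b(2) h h' sub
        by (simp add: lcos_mem subgroup.m_closed subgroup.m_inv_closed)
      moreover have "inv v \<in> V" using V(1) vc(1) by (rule subgroup.m_inv_closed)
      ultimately show "t \<in> V <#> D" using setmult_mem by metis
    qed
    then show "(D, C) \<in> ?R" using C D by (simp add: re_char)
  next
    fix C D F assume "(C, D) \<in> ?R" "(D, F) \<in> ?R"
    then have C: "C \<in> lcosets G H" and F: "F \<in> lcosets G H" and DC: "D \<subseteq> V <#> C" and FD: "F \<subseteq> V <#> D"
      and D: "D \<in> lcosets G H" by (auto simp: re_char)
    have "F \<subseteq> V <#> C"
    proof
      fix t assume "t \<in> F"
      then obtain v1 d where 1: "v1 \<in> V" "d \<in> D" "t = v1 \<otimes> d" using FD by (blast elim: setmult_memE)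
      then obtain v2 c where 2: "v2 \<in> V" "c \<in> C" "d = v2 \<otimes> c" using DC by (blast elim: setmult_memE)
      have "v1 \<in> carrier G" "v2 \<in> carrier G" "c \<in> carrier G" using 1 2 Vs Ysub[OF C] by auto
      then have "t = (v1 \<otimes> v2) \<otimes> c" using 1(3) 2(3) by (simp add: m_assoc)
      moreover have "v1 \<otimes> v2 \<in> V" using V(1) 1(1) 2(1) by (rule subgroup.m_closed)
      ultimately show "t \<in> V <#> C" using 2(2) setmult_mem by metis
    qed
    then show "(C, F) \<in> ?R" using C F by (simp add: re_char)
  qed
  have "?R \<subseteq> E"
  proof
    fix p assume "p \<in> ?R"
    then have "p \<in> right_entourage G H U" using V(3) W(3) re_mono by (metis prod.collapse subset_trans)
    then show "p \<in> E" using U(2) by blast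
  qed
  then show "\<exists>R. right_unif_entourage G TG H R \<and> equiv (lcosets G H) R \<and> R \<subseteq> E"
    using ent eq by blast
qed

lemma lcos_closed:
  assumes tg: "topological_group G TG" and sub: "subgroup H G" and cl: "closedin TG H" and a: "a \<in> carrier G"
  shows "closedin TG (a <# H)"
proof -
  have Hs: "H \<subseteq> carrier G" using sub subgroup.subset by blast
  have c: "continuous_map TG TG (\<lambda>x. inv a \<otimes> x)"
    by (intro tg_mult[OF tg] tg_const[OF tg] tg_id) (simp add: a)
  have "a <# H = {x \<in> topspace TG. inv a \<otimes> x \<in> H}"
  proof safe
    fix x assume "x \<in> a <# H"
    then obtain h where h: "h \<in> H" "x = a \<otimes> h" by (blast elim: lcos_memE)
    then have hc: "h \<in> carrier G" using Hs by blast
    show "x \<in> topspace TG" using h a hc tg_ts[OF tg] by simp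
    show "inv a \<otimes> x \<in> H" using h a hc by (simp add: m_assoc[symmetric])
  next
    fix x assume "x \<in> topspace TG" "inv a \<otimes> x \<in> H"
    then show "x \<in> a <# H" using subgroup.lcos_module_rev[OF sub is_group a] tg_ts[OF tg] by simp
  qed
  then show ?thesis using closedin_continuous_map_preimage[OF c cl] by simp
qed

lemma case1:
  assumes tg: "topological_group G TG" and HG: "Hausdorff_space TG" and sub: "subgroup H G"
    and cl: "closedin TG H" and na: "right_unif_non_archimedean G TG H"
  shows "constr G TG H {R. equiv (lcosets G H) R \<and> right_unif_entourage G TG H R}"
proof (intro constr.intro constr_axioms.intro)
  let ?Y = "lcosets G H"
  let ?RR = "{R. equiv ?Y R \<and> right_unif_entourage G TG H R}"
  have ts: "topspace TG = carrier G" by (rule tg_ts[OF tg])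
  have Hs: "H \<subseteq> carrier G" using sub subgroup.subset by blast
  have Ysub: "C \<subseteq> carrier G" if "C \<in> ?Y" for C
    using that Hs l_coset_subset_G by (auto simp: lcosets_def)
  have Yact: "x <# C \<in> ?Y" if "C \<in> ?Y" "x \<in> carrier G" for x C
    using that Hs by (auto simp: lcosets_def lcos_m_assoc)
  have getR: "\<exists>R\<in>?RR. R \<subseteq> right_entourage G H U" if "nhd_one G TG U" for U
  proof -
    have "right_unif_entourage G TG H (right_entourage G H U)"
      unfolding right_unif_entourage_def using re_sub that by blast
    then show ?thesis using na unfolding right_unif_non_archimedean_def by blast
  qed
  have nhd_open: "nhd_one G TG W" if "openin TG W" "\<one> \<in> W" for W
    unfolding nhd_one_def using that openin_subset by blast
  have RRent: "\<exists>U. openin TG U \<and> \<one> \<in> U \<and> right_entourage G H U \<subseteq> R" if RRR: "R \<in> ?RR" for R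
  proof -
    obtain U where U: "nhd_one G TG U" "right_entourage G H U \<subseteq> R"
      using RRR unfolding right_unif_entourage_def by blast
    then obtain W where W: "openin TG W" "\<one> \<in> W" "W \<subseteq> U" unfolding nhd_one_def by blast
    have "right_entourage G H W \<subseteq> R"
    proof
      fix p assume "p \<in> right_entourage G H W"
      then have "p \<in> right_entourage G H U" using W(3) re_mono by (metis prod.collapse)
      then show "p \<in> R" using U(2) by blast
    qed
    then show ?thesis using W by blast
  qed
  have move: "(u <# y, y) \<in> R" if "R \<in> ?RR" "right_entourage G H U \<subseteq> R" "u \<in> U" "u \<in> carrier G" "y \<in> ?Y" for R U u y
  proof -
    have "u <# y \<subseteq> U <#> y"
    proof
      fix t assume "t \<in> u <# y"
      then obtain c where "c \<in> y" "t = u \<otimes> c" unfolding l_coset_def by blast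
      then show "t \<in> U <#> y" using that(3) setmult_mem by blast
    qed
    then have "(y, u <# y) \<in> R" using that Yact re_char by blast
    moreover have "sym R" using that(1) by (simp add: equiv_def)
    ultimately show ?thesis by (meson symD)
  qed
  show "group G" by (rule is_group)
  show "topological_group G TG" "Hausdorff_space TG" "subgroup H G" by fact+
  show "?RR \<noteq> {}"
  proof -
    have "nhd_one G TG (carrier G)" using nhd_open[of "carrier G"] openin_topspace[of TG] ts by simp
    then show ?thesis using getR by blast
  qed
  show "\<And>R. R \<in> ?RR \<Longrightarrow> equiv ?Y R" by blast
  show "\<And>R1 R2. R1 \<in> ?RR \<Longrightarrow> R2 \<in> ?RR \<Longrightarrow> \<exists>R3\<in>?RR. R3 \<subseteq> R1 \<inter> R2"
  proof -
    fix R1 R2 assume R1: "R1 \<in> ?RR" and R2: "R2 \<in> ?RR"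
    obtain U1 where U1: "openin TG U1" "\<one> \<in> U1" "right_entourage G H U1 \<subseteq> R1" using RRent[OF R1] by blast
    obtain U2 where U2: "openin TG U2" "\<one> \<in> U2" "right_entourage G H U2 \<subseteq> R2" using RRent[OF R2] by blast
    have "nhd_one G TG (U1 \<inter> U2)" using U1 U2 by (intro nhd_open) auto
    then obtain R3 where R3: "R3 \<in> ?RR" "R3 \<subseteq> right_entourage G H (U1 \<inter> U2)" using getR by blast
    have "right_entourage G H (U1 \<inter> U2) \<subseteq> R1 \<inter> R2"
    proof
      fix p assume "p \<in> right_entourage G H (U1 \<inter> U2)"
      then have "p \<in> right_entourage G H U1" "p \<in> right_entourage G H U2" using re_mono
        by (metis inf_le1 prod.collapse, metis inf_le2 prod.collapse)
      then show "p \<in> R1 \<inter> R2" using U1 U2 by blast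
    qed
    then show "\<exists>R3\<in>?RR. R3 \<subseteq> R1 \<inter> R2" using R3 by blast
  qed
  show "\<And>y z. y \<in> ?Y \<Longrightarrow> z \<in> ?Y \<Longrightarrow> y \<noteq> z \<Longrightarrow> \<exists>R\<in>?RR. (y, z) \<notin> R"
  proof -
    fix y z assume y: "y \<in> ?Y" and z: "z \<in> ?Y" and ne: "y \<noteq> z"
    obtain a where a: "a \<in> carrier G" "y = a <# H" using y by (auto simp: lcosets_def)
    obtain b where b: "b \<in> carrier G" "z = b <# H" using z by (auto simp: lcosets_def)
    have bnot: "b \<notin> a <# H"
    proof
      assume "b \<in> a <# H"
      then have "a <# H = b <# H" by (rule l_repr_independence[OF _ a(1) sub])
      then show False using ne a b by simp
    qed
    have bz: "b \<in> z" using b lcos_mem[OF subgroup.one_closed[OF sub], of b] by simp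
    have c: "continuous_map TG TG (\<lambda>u. inv u \<otimes> b)"
      by (intro tg_mult[OF tg] tg_inv[OF tg] tg_const[OF tg] tg_id) (simp add: b)
    have op: "openin TG (topspace TG - (a <# H))" using lcos_closed[OF tg sub cl a(1)] by (simp add: closedin_def)
    define U where "U = {u \<in> topspace TG. inv u \<otimes> b \<in> topspace TG - (a <# H)}"
    have Uo: "openin TG U" unfolding U_def by (rule openin_continuous_map_preimage[OF c op])
    have U1: "\<one> \<in> U" unfolding U_def using bnot b ts by simp
    obtain R where R: "R \<in> ?RR" "R \<subseteq> right_entourage G H U" using getR[OF nhd_open[OF Uo U1]] by blast
    have "(y, z) \<notin> R"
    proof
      assume "(y, z) \<in> R"
      then have "z \<subseteq> U <#> y" using R(2) re_char by blast
      then obtain u c where uc: "u \<in> U" "c \<in> y" "b = u \<otimes> c" using bz by (blast elim: setmult_memE)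
      have uc': "u \<in> carrier G" "c \<in> carrier G" using uc U_def ts Ysub[OF y] by auto
      have "inv u \<otimes> b = c" using uc(3) uc' by (simp add: m_assoc[symmetric])
      then show False using uc(1,2) a(2) U_def by auto
    qed
    then show "\<exists>R\<in>?RR. (y, z) \<notin> R" using R(1) by blast
  qed
  show "\<And>x R. x \<in> carrier G \<Longrightarrow> R \<in> ?RR \<Longrightarrow> \<exists>R'\<in>?RR. \<forall>y z. (y, z) \<in> R' \<longrightarrow> (x <# y, x <# z) \<in> R"
  proof -
    fix x R assume x: "x \<in> carrier G" and R: "R \<in> ?RR"
    obtain W where W: "openin TG W" "\<one> \<in> W" "right_entourage G H W \<subseteq> R" using RRent[OF R] by blast
    have c: "continuous_map TG TG (\<lambda>v. x \<otimes> v \<otimes> inv x)"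
      by (intro tg_mult[OF tg] tg_const[OF tg] tg_id) (simp_all add: x)
    define W' where "W' = {v \<in> topspace TG. x \<otimes> v \<otimes> inv x \<in> W}"
    have W'o: "openin TG W'" unfolding W'_def by (rule openin_continuous_map_preimage[OF c W(1)])
    have W'1: "\<one> \<in> W'" unfolding W'_def using W(2) x ts by simp
    obtain R' where R': "R' \<in> ?RR" "R' \<subseteq> right_entourage G H W'" using getR[OF nhd_open[OF W'o W'1]] by blast
    have "\<forall>y z. (y, z) \<in> R' \<longrightarrow> (x <# y, x <# z) \<in> R"
    proof (intro allI impI)
      fix y z assume "(y, z) \<in> R'"
      then have y: "y \<in> ?Y" and z: "z \<in> ?Y" and zy: "z \<subseteq> W' <#> y" using R'(2) re_char by blast+
      have "x <# z \<subseteq> W <#> (x <# y)"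
      proof
        fix t assume "t \<in> x <# z"
        then obtain s where s: "s \<in> z" "t = x \<otimes> s" unfolding l_coset_def by blast
        then obtain v c where vc: "v \<in> W'" "c \<in> y" "s = v \<otimes> c" using zy by (blast elim: setmult_memE)
        have vc': "v \<in> carrier G" "c \<in> carrier G" using vc W'_def ts Ysub[OF y] by auto
        have aux: "inv x \<otimes> (x \<otimes> c) = c" using vc' x by (simp add: m_assoc[symmetric])
        have "t = (x \<otimes> v \<otimes> inv x) \<otimes> (x \<otimes> c)" using s(2) vc(3) vc' x aux by (simp add: m_assoc)
        moreover have "x \<otimes> v \<otimes> inv x \<in> W" using vc(1) W'_def by blast
        moreover have "x \<otimes> c \<in> x <# y" using vc(2) unfolding l_coset_def by blast
        ultimately show "t \<in> W <#> (x <# y)" using setmult_mem by metis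
      qed
      then have "(x <# y, x <# z) \<in> right_entourage G H W" using Yact[OF y x] Yact[OF z x] re_char by blast
      then show "(x <# y, x <# z) \<in> R" using W(3) by blast
    qed
    then show "\<exists>R'\<in>?RR. \<forall>y z. (y, z) \<in> R' \<longrightarrow> (x <# y, x <# z) \<in> R" using R'(1) by blast
  qed
  show "\<And>y R. y \<in> ?Y \<Longrightarrow> R \<in> ?RR \<Longrightarrow> \<exists>W. openin TG W \<and> \<one> \<in> W \<and> (\<forall>u\<in>W. (u <# y, y) \<in> R)"
  proof -
    fix y R assume y: "y \<in> ?Y" and R: "R \<in> ?RR"
    obtain W where W: "openin TG W" "\<one> \<in> W" "right_entourage G H W \<subseteq> R" using RRent[OF R] by blast
    have "\<forall>u\<in>W. (u <# y, y) \<in> R"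
    proof
      fix u assume u: "u \<in> W"
      then have "u \<in> carrier G" using openin_subset[OF W(1)] ts by blast
      then show "(u <# y, y) \<in> R" using move[OF R W(3) u _ y] by blast
    qed
    then show "\<exists>W. openin TG W \<and> \<one> \<in> W \<and> (\<forall>u\<in>W. (u <# y, y) \<in> R)" using W by blast
  qed
  show "\<And>R. R \<in> ?RR \<Longrightarrow> \<exists>W R'. openin TG W \<and> \<one> \<in> W \<and> R' \<in> ?RR \<and> (\<forall>u\<in>W. \<forall>y z. (y, z) \<in> R' \<longrightarrow> (u <# y, u <# z) \<in> R)"
  proof -
    fix R assume R: "R \<in> ?RR"
    obtain W where W: "openin TG W" "\<one> \<in> W" "right_entourage G H W \<subseteq> R" using RRent[OF R] by blast
    have eqR: "equiv ?Y R" using R by blast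
    have "\<forall>u\<in>W. \<forall>y z. (y, z) \<in> R \<longrightarrow> (u <# y, u <# z) \<in> R"
    proof (intro ballI allI impI)
      fix u y z assume u: "u \<in> W" and yz: "(y, z) \<in> R"
      have uc: "u \<in> carrier G" using u openin_subset[OF W(1)] ts by blast
      have y: "y \<in> ?Y" and z: "z \<in> ?Y" using yz eqR by (auto simp: equiv_def refl_on_def)
      have 1: "(u <# y, y) \<in> R" by (rule move[OF R W(3) u uc y])
      have 2: "(u <# z, z) \<in> R" by (rule move[OF R W(3) u uc z])
      have 3: "(z, u <# z) \<in> R" using 2 eqR by (meson equiv_def symD)
      show "(u <# y, u <# z) \<in> R" using 1 yz 3 eqR by (meson equiv_def transD)
    qed
    then show "\<exists>W R'. openin TG W \<and> \<one> \<in> W \<and> R' \<in> ?RR \<and> (\<forall>u\<in>W. \<forall>y z. (y, z) \<in> R' \<longrightarrow> (u <# y, u <# z) \<in> R)"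
      using W R by blast
  qed
qed

end

theorem theorem7p8:
  fixes M :: "'m monoid" and TM :: "'m topology"
    and G :: "'g monoid" and TG :: "'g topology" and f :: "'m \<Rightarrow> 'g"
  assumes epi: "tgr_epi M TM G TG f"
    and H_def: "H = TG closure_of (f ` carrier M)"
    and cond: "right_unif_non_archimedean G TG H \<or> non_archimedean_group G TG \<or> openin TG H"
  shows "TG closure_of (f ` carrier M) = carrier G"
proof -
  have hM: "haus_topgroup M TM" and hG: "haus_topgroup G TG" and cf: "cont_hom M TM G TG f"
    and E: "\<forall>(P :: 'g list monoid) TP g h.
        haus_topgroup P TP \<and> cont_hom G TG P TP g \<and> cont_hom G TG P TP h \<and>
        (\<forall>x\<in>carrier M. g (f x) = h (f x)) \<longrightarrow> (\<forall>y\<in>carrier G. g y = h y)"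
    using epi unfolding tgr_epi_def by blast+
  have tg: "topological_group G TG" and HG: "Hausdorff_space TG" using hG by (auto simp: haus_topgroup_def)
  have gG: "group G" and gM: "group M" using hG hM by (auto simp: haus_topgroup_def topological_group_def)
  interpret G: grp G unfolding grp_def by (rule gG)
  have fh: "f \<in> hom M G" using cf by (simp add: cont_hom_def)
  interpret fhom: group_hom M G f by (simp add: group_hom_def group_hom_axioms_def gM gG fh)
  have subK: "subgroup (f ` carrier M) G" by (rule fhom.img_is_subgroup)
  have subH: "subgroup H G" unfolding H_def by (rule G.closure_subgroup[OF tg subK])
  have clH: "closedin TG H" unfolding H_def by simp
  have ts: "topspace TG = carrier G" using tg by (simp add: topological_group_def)
  have KH: "f ` carrier M \<subseteq> H" unfolding H_def
    by (rule closure_of_subset) (use subK subgroup.subset ts in auto)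
  obtain RR where C: "constr G TG H RR"
  proof -
    have "right_unif_non_archimedean G TG H \<or> openin TG H"
      using cond G.case2[OF tg subH] by blast
    then show thesis
    proof
      assume "right_unif_non_archimedean G TG H"
      then show thesis using G.case1[OF tg HG subH clH] that by blast
    next
      assume "openin TG H"
      then show thesis using G.case3[OF tg HG subH] that by blast
    qed
  qed
  have "carrier G \<subseteq> H"
  proof (rule constr.constr_main[OF C])
    fix Q :: "'g list monoid" and TQ g h
    assume "haus_topgroup Q TQ" "cont_hom G TG Q TQ g" "cont_hom G TG Q TQ h" "\<forall>y\<in>H. g y = h y"
    moreover then have "\<forall>x\<in>carrier M. g (f x) = h (f x)" using KH by blast
    ultimately show "\<forall>y\<in>carrier G. g y = h y" using E by blast
  qed
  moreover have "H \<subseteq> carrier G" using subH subgroup.subset by blast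
  ultimately show ?thesis using H_def by simp
qed

end
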